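(* For the $N$-relay 1-2-1 diamond network with relays operating in FD, the linear program $\mathrm{P1^d}$ (with $\mathsf C_p=\min\{\ell_{p,0},\ell_{N+1,p}\}$) has an optimal solution $(x_1,\dots,x_N)$ with at most $2$ indices $p$ such that $x_p>0$. Hence the FD approximate capacity $\mathsf{C}_{\rm cs,iid}$ is achieved by activating at most two relays, independently of $N$.
   Context: Diamond network: nodes $[0:N+1]$, source $0$, destination $N+1$, relays $[1:N]$; the only links are $(0,p)$ and $(p,N+1)$ for $p\in[1:N]$, with positive rational capacities $\ell_{p,0}$ and $\ell_{N+1,p}$. $\mathrm{P1^d}$ is the linear program $\max\sum_{p=1}^N x_p\mathsf C_p$ subject to $0\le x_p\le1$ for all $p\in[1:N]$, $\sum_{p=1}^N x_p\mathsf C_p/\ell_{p,0}\le1$, and $\sum_{p=1}^N x_p\mathsf C_p/\ell_{N+1,p}\le1$. In the FD case its optimal value equals $\mathsf{C}_{\rm cs,iid}$, the FD approximate capacity $\max_\lambda\min_\Omega\sum_{i\in\Omega,j\in\Omega^c}(\sum_{s:\,(i,j)\text{ active in }s}\lambda_s)\ell_{j,i}$ over probability vectors on FD beam states and cuts $0\in\Omega\subseteq[0:N]$. *)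

theory Defs
  imports Complex_Main
begin

text \<open>Diamond network with relays 1..N. lsr p = link capacity from source 0 to relay p
  (ell_{p,0}); lrd p = link capacity from relay p to destination N+1 (ell_{N+1,p}).\<close>

definition Cp :: "(nat \<Rightarrow> real) \<Rightarrow> (nat \<Rightarrow> real) \<Rightarrow> nat \<Rightarrow> real" where
  "Cp lsr lrd p = min (lsr p) (lrd p)"

definition P1d_obj :: "nat \<Rightarrow> (nat \<Rightarrow> real) \<Rightarrow> (nat \<Rightarrow> real) \<Rightarrow> (nat \<Rightarrow> real) \<Rightarrow> real" where
  "P1d_obj N lsr lrd x = (\<Sum>p=1..N. x p * Cp lsr lrd p)"

definition P1d_feasible :: "nat \<Rightarrow> (nat \<Rightarrow> real) \<Rightarrow> (nat \<Rightarrow> real) \<Rightarrow> (nat \<Rightarrow> real) \<Rightarrow> bool" where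
  "P1d_feasible N lsr lrd x \<longleftrightarrow>
     (\<forall>p\<in>{1..N}. 0 \<le> x p \<and> x p \<le> 1) \<and>
     (\<Sum>p=1..N. x p * Cp lsr lrd p / lsr p) \<le> 1 \<and>
     (\<Sum>p=1..N. x p * Cp lsr lrd p / lrd p) \<le> 1"

definition P1d_optimal :: "nat \<Rightarrow> (nat \<Rightarrow> real) \<Rightarrow> (nat \<Rightarrow> real) \<Rightarrow> (nat \<Rightarrow> real) \<Rightarrow> bool" where
  "P1d_optimal N lsr lrd x \<longleftrightarrow>
     P1d_feasible N lsr lrd x \<and>
     (\<forall>y. P1d_feasible N lsr lrd y \<longrightarrow> P1d_obj N lsr lrd y \<le> P1d_obj N lsr lrd x)"

end

theory Submission imports Defs "HOL-Analysis.Analysis" begin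

lemma feas_intro:
  assumes pos1: "\<forall>p\<in>{1..N}. lsr p > 0" and pos2: "\<forall>p\<in>{1..N}. lrd p > 0"
    and nn: "\<forall>p\<in>{1..N}. 0 \<le> x p"
    and s1: "(\<Sum>p=1..N. x p * Cp lsr lrd p / lsr p) \<le> 1"
    and s2: "(\<Sum>p=1..N. x p * Cp lsr lrd p / lrd p) \<le> 1"
  shows "P1d_feasible N lsr lrd x"
  unfolding P1d_feasible_def
proof (intro conjI ballI s1 s2)
  fix p assume p: "p \<in> {1..N}"
  show "0 \<le> x p" using nn p by blast
  have Cq: "\<forall>q\<in>{1..N}. Cp lsr lrd q > 0" using pos1 pos2 by (simp add: Cp_def)
  have C: "Cp lsr lrd p > 0" using Cq p by blast
  have t1: "x p * Cp lsr lrd p / lsr p \<le> 1"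
    by (rule order_trans[OF member_le_sum s1]) (use p in auto, intro divide_nonneg_pos mult_nonneg_nonneg, use nn Cq pos1 in \<open>auto simp: less_imp_le\<close>)
  have t2: "x p * Cp lsr lrd p / lrd p \<le> 1"
    by (rule order_trans[OF member_le_sum s2]) (use p in auto, intro divide_nonneg_pos mult_nonneg_nonneg, use nn Cq pos2 in \<open>auto simp: less_imp_le\<close>)
  have a: "x p * Cp lsr lrd p \<le> lsr p" using t1 pos1 p by (simp add: divide_le_eq)
  have b: "x p * Cp lsr lrd p \<le> lrd p" using t2 pos2 p by (simp add: divide_le_eq)
  have "x p * Cp lsr lrd p \<le> Cp lsr lrd p" using a b by (simp add: Cp_def)
  thus "x p \<le> 1" using C by simp
qed

lemma sum3:
  fixes f :: "nat \<Rightarrow> real"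
  assumes "i \<in> A" "j \<in> A" "k \<in> A" "i \<noteq> j" "i \<noteq> k" "j \<noteq> k" "finite A"
  shows "(\<Sum>r\<in>A. (if r = i then a else if r = j then b else if r = k then c else 0) * f r)
     = a * f i + b * f j + c * f k"
proof -
  have "(\<Sum>r\<in>A. (if r = i then a else if r = j then b else if r = k then c else 0) * f r)
    = (\<Sum>r\<in>A. (if r = i then a * f i else 0) + (if r = j then b * f j else 0) + (if r = k then c * f k else 0))"
    by (rule sum.cong) (use assms in auto)
  also have "\<dots> = a * f i + b * f j + c * f k"
    using assms by (simp add: sum.distrib)
  finally show ?thesis .
qed

lemma exist_dir:
  fixes ai aj ak bi bj bk Ci Cj Ck :: real
  assumes "ai > 0" "aj > 0" "ak > 0"
  shows "\<exists>ei ej ek. ei*ai + ej*aj + ek*ak = 0 \<and> ei*bi + ej*bj + ek*bk = 0 \<and>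
     ei*Ci + ej*Cj + ek*Ck \<ge> 0 \<and> (ei < 0 \<or> ej < 0 \<or> ek < 0)"
proof -
  have "\<exists>ei ej ek. ei*ai + ej*aj + ek*ak = 0 \<and> ei*bi + ej*bj + ek*bk = 0 \<and> (ei \<noteq> 0 \<or> ej \<noteq> 0 \<or> ek \<noteq> 0)"
  proof (cases "aj*bk - ak*bj = 0 \<and> ak*bi - ai*bk = 0 \<and> ai*bj - aj*bi = 0")
    case True
    show ?thesis
      by (rule exI[of _ aj], rule exI[of _ "-ai"], rule exI[of _ 0]) (use True assms in \<open>auto simp: algebra_simps\<close>)
  next
    case False
    show ?thesis
      by (rule exI[of _ "aj*bk - ak*bj"], rule exI[of _ "ak*bi - ai*bk"], rule exI[of _ "ai*bj - aj*bi"])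
        (use False in \<open>auto simp: algebra_simps\<close>)
  qed
  then obtain ei ej ek where e: "ei*ai + ej*aj + ek*ak = 0" "ei*bi + ej*bj + ek*bk = 0" "ei \<noteq> 0 \<or> ej \<noteq> 0 \<or> ek \<noteq> 0"
    by blast
  have neg: "ei < 0 \<or> ej < 0 \<or> ek < 0" if "ei*ai + ej*aj + ek*ak = 0" "ei \<noteq> 0 \<or> ej \<noteq> 0 \<or> ek \<noteq> 0" for ei ej ek
  proof (rule ccontr)
    assume "\<not> ?thesis"
    hence "ei \<ge> 0" "ej \<ge> 0" "ek \<ge> 0" by auto
    hence "ei*ai \<ge> 0" "ej*aj \<ge> 0" "ek*ak \<ge> 0" using assms by auto
    hence "ei*ai = 0" "ej*aj = 0" "ek*ak = 0" using that(1) by linarith+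
    thus False using that(2) assms by auto
  qed
  show ?thesis
  proof (cases "ei*Ci + ej*Cj + ek*Ck \<ge> 0")
    case True thus ?thesis using e neg[OF e(1) e(3)] by blast
  next
    case False
    have a: "(-ei)*ai + (-ej)*aj + (-ek)*ak = 0" "(-ei)*bi + (-ej)*bj + (-ek)*bk = 0"
      "-ei \<noteq> 0 \<or> -ej \<noteq> 0 \<or> -ek \<noteq> 0" "(-ei)*Ci + (-ej)*Cj + (-ek)*Ck \<ge> 0"
      using e False by auto
    show ?thesis using a neg[OF a(1) a(3)] by blast
  qed
qed

lemma reduce:
  assumes pos1: "\<forall>p\<in>{1..N}. lsr p > 0" and pos2: "\<forall>p\<in>{1..N}. lrd p > 0"
    and fx: "P1d_feasible N lsr lrd x"
    and ijk: "i \<in> {p\<in>{1..N}. x p > 0}" "j \<in> {p\<in>{1..N}. x p > 0}" "k \<in> {p\<in>{1..N}. x p > 0}"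
    and dist: "i \<noteq> j" "i \<noteq> k" "j \<noteq> k"
  shows "\<exists>x'. P1d_feasible N lsr lrd x' \<and> P1d_obj N lsr lrd x' \<ge> P1d_obj N lsr lrd x \<and>
     {p\<in>{1..N}. x' p > 0} \<subset> {p\<in>{1..N}. x p > 0}"
proof -
  define C where "C = Cp lsr lrd"
  define A where "A = (\<lambda>p. C p / lsr p)"
  define B where "B = (\<lambda>p. C p / lrd p)"
  have Cq: "\<forall>q\<in>{1..N}. C q > 0" using pos1 pos2 by (simp add: Cp_def C_def)
  have Aq: "\<forall>q\<in>{1..N}. A q > 0" using Cq pos1 by (simp add: A_def)
  obtain ei ej ek where e: "ei*A i + ej*A j + ek*A k = 0" "ei*B i + ej*B j + ek*B k = 0"
     "ei*C i + ej*C j + ek*C k \<ge> 0" "ei < 0 \<or> ej < 0 \<or> ek < 0"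
    using exist_dir[of "A i" "A j" "A k" "B i" "B j" "B k" "C i" "C j" "C k"] Aq ijk by auto
  define d where "d = (\<lambda>r. if r = i then ei else if r = j then ej else if r = k then ek else (0::real))"
  have sd: "(\<Sum>r=1..N. d r * f r) = ei * f i + ej * f j + ek * f k" for f
    unfolding d_def by (rule sum3) (use ijk dist in auto)
  define S where "S = {r\<in>{i,j,k}. d r < 0}"
  have Sne: "S \<noteq> {}" using e(4) dist unfolding S_def d_def by auto
  have Sfin: "finite S" unfolding S_def by auto
  define t where "t = Min ((\<lambda>r. x r / (- d r)) ` S)"
  obtain m where m: "m \<in> S" "t = x m / (- d m)"
  proof -
    have "t \<in> (\<lambda>r. x r / (- d r)) ` S" unfolding t_def using Sne Sfin by (intro Min_in) auto
    thus ?thesis using that by blast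
  qed
  have tle: "t \<le> x r / (- d r)" if "r \<in> S" for r
    unfolding t_def using that Sfin by auto
  have mS: "m \<in> {i,j,k}" "d m < 0" using m(1) unfolding S_def by auto
  have xm: "x m > 0" using mS ijk by auto
  have t0: "t \<ge> 0" using m(2) xm mS by (simp add: divide_nonneg_neg less_imp_le)
  define x' where "x' = (\<lambda>r. x r + t * d r)"
  have dout: "d r = 0" if "r \<notin> {i,j,k}" for r using that unfolding d_def by auto
  have sx: "(\<Sum>r=1..N. x' r * f r) = (\<Sum>r=1..N. x r * f r) + t * (ei * f i + ej * f j + ek * f k)" for f
  proof -
    have "(\<Sum>r=1..N. x' r * f r) = (\<Sum>r=1..N. x r * f r) + t * (\<Sum>r=1..N. d r * f r)"
      unfolding x'_def by (simp add: algebra_simps sum.distrib sum_distrib_left)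
    thus ?thesis using sd by simp
  qed
  have nn: "\<forall>p\<in>{1..N}. 0 \<le> x' p"
  proof
    fix p assume p: "p \<in> {1..N}"
    have xp: "x p \<ge> 0" using fx p unfolding P1d_feasible_def by auto
    show "0 \<le> x' p"
    proof (cases "d p < 0")
      case True
      hence "p \<in> S" using dout unfolding S_def by force
      hence "t \<le> x p / (- d p)" by (rule tle)
      hence "t * (- d p) \<le> x p" using True pos_le_divide_eq[of "- d p" t "x p"] by simp
      thus ?thesis unfolding x'_def by (simp add: algebra_simps)
    next
      case False thus ?thesis unfolding x'_def using xp t0 by simp
    qed
  qed
  have s1: "(\<Sum>p=1..N. x' p * Cp lsr lrd p / lsr p) \<le> 1"
  proof -
    have "(\<Sum>p=1..N. x' p * Cp lsr lrd p / lsr p) = (\<Sum>p=1..N. x' p * A p)"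
      unfolding A_def C_def by (simp add: algebra_simps)
    also have "\<dots> = (\<Sum>p=1..N. x p * A p)" using sx e(1) by simp
    also have "\<dots> = (\<Sum>p=1..N. x p * Cp lsr lrd p / lsr p)"
      unfolding A_def C_def by (simp add: algebra_simps)
    finally show ?thesis using fx unfolding P1d_feasible_def by simp
  qed
  have s2: "(\<Sum>p=1..N. x' p * Cp lsr lrd p / lrd p) \<le> 1"
  proof -
    have "(\<Sum>p=1..N. x' p * Cp lsr lrd p / lrd p) = (\<Sum>p=1..N. x' p * B p)"
      unfolding B_def C_def by (simp add: algebra_simps)
    also have "\<dots> = (\<Sum>p=1..N. x p * B p)" using sx e(2) by simp
    also have "\<dots> = (\<Sum>p=1..N. x p * Cp lsr lrd p / lrd p)"
      unfolding B_def C_def by (simp add: algebra_simps)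
    finally show ?thesis using fx unfolding P1d_feasible_def by simp
  qed
  have f': "P1d_feasible N lsr lrd x'" by (rule feas_intro[OF pos1 pos2 nn s1 s2])
  have obj: "P1d_obj N lsr lrd x' \<ge> P1d_obj N lsr lrd x"
    unfolding P1d_obj_def using sx[of C] e(3) t0 unfolding C_def by simp
  have xm': "x' m = 0" unfolding x'_def using m(2) mS by (simp add: field_simps)
  have sub: "{p\<in>{1..N}. x' p > 0} \<subseteq> {p\<in>{1..N}. x p > 0}"
  proof
    fix p assume p: "p \<in> {p\<in>{1..N}. x' p > 0}"
    show "p \<in> {p\<in>{1..N}. x p > 0}"
    proof (cases "p \<in> {i,j,k}")
      case True thus ?thesis using ijk by auto
    next
      case False thus ?thesis using p dout[OF False] unfolding x'_def by auto
    qed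
  qed
  have "m \<in> {p\<in>{1..N}. x p > 0}" "m \<notin> {p\<in>{1..N}. x' p > 0}" using mS ijk xm' by auto
  hence "{p\<in>{1..N}. x' p > 0} \<subset> {p\<in>{1..N}. x p > 0}" using sub by blast
  thus ?thesis using f' obj by blast
qed

lemma coord_cont: "continuous_on S (\<lambda>x::nat\<Rightarrow>real. x p)"
  by (rule continuous_on_subset[OF continuous_on_product_coordinates]) auto

lemma exists_opt:
  assumes pos1: "\<forall>p\<in>{1..N}. lsr p > 0" and pos2: "\<forall>p\<in>{1..N}. lrd p > 0"
  shows "\<exists>x. P1d_optimal N lsr lrd x"
proof -
  define SS where "SS = (\<lambda>p. if p \<in> {1..N} then {0..1} else {0::real})"
  define K where "K = PiE UNIV SS \<inter> {x. (\<Sum>p=1..N. x p * Cp lsr lrd p / lsr p) \<le> 1}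
     \<inter> {x. (\<Sum>p=1..N. x p * Cp lsr lrd p / lrd p) \<le> 1}"
  have c0: "compact (PiE UNIV SS)"
  proof -
    have "compactin (product_topology (\<lambda>_. euclidean) UNIV) (PiE UNIV SS)"
      unfolding compactin_PiE by (auto simp: SS_def)
    thus ?thesis by (simp add: euclidean_product_topology)
  qed
  have cl1: "closed {x::nat\<Rightarrow>real. (\<Sum>p=1..N. x p * Cp lsr lrd p / lsr p) \<le> 1}"
    by (intro closed_Collect_le continuous_intros coord_cont) (use pos1 pos2 in force)+
  have cl2: "closed {x::nat\<Rightarrow>real. (\<Sum>p=1..N. x p * Cp lsr lrd p / lrd p) \<le> 1}"
    by (intro closed_Collect_le continuous_intros coord_cont) (use pos1 pos2 in force)+
  have cK: "compact K" unfolding K_def using c0 cl1 cl2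
    by (intro compact_Int_closed closed_Int) auto
  have z: "(\<lambda>_. 0::real) \<in> K" unfolding K_def SS_def by auto
  have cont: "continuous_on K (P1d_obj N lsr lrd)"
    unfolding P1d_obj_def
    by (intro continuous_intros coord_cont)
  obtain x where x: "x \<in> K" "\<forall>y\<in>K. P1d_obj N lsr lrd y \<le> P1d_obj N lsr lrd x"
    using continuous_attains_sup[OF cK _ cont] z by blast
  have xs: "x p \<in> {0..1}" if "p \<in> {1..N}" for p
  proof -
    have "x \<in> PiE UNIV SS" using x(1) by (simp add: K_def)
    hence "x p \<in> SS p" by (simp add: PiE_iff)
    thus ?thesis using that by (simp add: SS_def)
  qed
  have fx: "P1d_feasible N lsr lrd x" using x(1) xs unfolding K_def P1d_feasible_def
    by auto
  show ?thesis unfolding P1d_optimal_def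
  proof (intro exI[of _ x] conjI allI impI)
    show "P1d_feasible N lsr lrd x" by (rule fx)
  next
    fix y assume fy: "P1d_feasible N lsr lrd y"
    define y' where "y' = (\<lambda>p. if p \<in> {1..N} then y p else 0)"
    have e: "(\<Sum>p=1..N. y' p * f p) = (\<Sum>p=1..N. y p * f p)" for f :: "nat \<Rightarrow> real"
      unfolding y'_def by (rule sum.cong) auto
    have "y' \<in> K"
    proof -
      have "y' \<in> PiE UNIV SS" using fy unfolding PiE_iff SS_def y'_def P1d_feasible_def by auto
      moreover have "(\<Sum>p=1..N. y' p * Cp lsr lrd p / lsr p) \<le> 1"
        using e[of "\<lambda>p. Cp lsr lrd p / lsr p"] fy unfolding P1d_feasible_def by (simp add: mult.assoc)
      moreover have "(\<Sum>p=1..N. y' p * Cp lsr lrd p / lrd p) \<le> 1"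
        using e[of "\<lambda>p. Cp lsr lrd p / lrd p"] fy unfolding P1d_feasible_def by (simp add: mult.assoc)
      ultimately show ?thesis unfolding K_def by blast
    qed
    hence "P1d_obj N lsr lrd y' \<le> P1d_obj N lsr lrd x" using x(2) by blast
    thus "P1d_obj N lsr lrd y \<le> P1d_obj N lsr lrd x" unfolding P1d_obj_def using e by simp
  qed
qed

theorem lemma5:
  fixes N :: nat and lsr lrd :: "nat \<Rightarrow> real"
  assumes "\<forall>p\<in>{1..N}. lsr p \<in> \<rat> \<and> lsr p > 0"
      and "\<forall>p\<in>{1..N}. lrd p \<in> \<rat> \<and> lrd p > 0"
  shows "\<exists>x. P1d_optimal N lsr lrd x \<and> card {p\<in>{1..N}. x p > 0} \<le> 2"
proof -
  have pos1: "\<forall>p\<in>{1..N}. lsr p > 0" and pos2: "\<forall>p\<in>{1..N}. lrd p > 0" using assms by auto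
  have main: "\<forall>x. P1d_optimal N lsr lrd x \<and> card {p\<in>{1..N}. x p > 0} = n \<longrightarrow>
     (\<exists>z. P1d_optimal N lsr lrd z \<and> card {p\<in>{1..N}. z p > 0} \<le> 2)" for n
  proof (induction n rule: less_induct)
    case (less n)
    show ?case
    proof (intro allI impI)
      fix x assume h: "P1d_optimal N lsr lrd x \<and> card {p\<in>{1..N}. x p > 0} = n"
      define A where "A = {p\<in>{1..N}. x p > 0}"
      show "\<exists>z. P1d_optimal N lsr lrd z \<and> card {p\<in>{1..N}. z p > 0} \<le> 2"
      proof (cases "n \<le> 2")
        case True thus ?thesis using h by blast
      next
        case False
        have fA: "finite A" unfolding A_def by auto
        have cA: "card A > 2" using False h unfolding A_def by simp
        obtain i where i: "i \<in> A" using cA by (metis card.empty ex_in_conv not_less_zero)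
        have "card (A - {i}) > 1" using cA i fA by simp
        then obtain j where j: "j \<in> A - {i}" by (metis card.empty ex_in_conv not_less_zero)
        have "card (A - {i} - {j}) > 0" using cA i j fA by (simp add: card_Diff_singleton_if)
        then obtain k where k: "k \<in> A - {i} - {j}" by (metis card.empty ex_in_conv less_irrefl)
        have fx: "P1d_feasible N lsr lrd x" using h unfolding P1d_optimal_def by blast
        obtain x' where x': "P1d_feasible N lsr lrd x'" "P1d_obj N lsr lrd x' \<ge> P1d_obj N lsr lrd x"
          "{p\<in>{1..N}. x' p > 0} \<subset> A"
          using reduce[OF pos1 pos2 fx, of i j k] i j k unfolding A_def by auto
        have opt': "P1d_optimal N lsr lrd x'"
          using h x'(1,2) unfolding P1d_optimal_def by force
        have "card {p\<in>{1..N}. x' p > 0} < n"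
          using psubset_card_mono[OF fA x'(3)] h unfolding A_def by simp
        thus ?thesis using less opt' by blast
      qed
    qed
  qed
  obtain x where "P1d_optimal N lsr lrd x" using exists_opt[OF pos1 pos2] by blast
  thus ?thesis using main by blast
qed

end
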